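(* Let $N(n)=|\{w\in\mathcal{L}: |w|\le n\}|$ be the number of consistent outcome words of length at most $n$. Then there are constants $0<c_1\le c_2$ such that $c_1 n\le \log_2 N(n)\le c_2 n$ for all $n\ge 1$. In particular the number of binary hidden variables needed to determine all possible outcome sequences of length up to $n$ grows linearly in $n$, i.e. of the same order as $\log_2|\{w\in\tilde\Sigma^*:|w|\le n\}|$.
   Context: Let $\Sigma=\{A,B,C,a,b,c,\alpha,\beta,\gamma\}$ be nine observables arranged in a $3\times 3$ square with rows $(A,B,C)$, $(a,b,c)$, $(\alpha,\beta,\gamma)$. The six \emph{contexts} are the three rows $\{A,B,C\},\{a,b,c\},\{\alpha,\beta,\gamma\}$ and the three columns $\{A,a,\alpha\},\{B,b,\beta\},\{C,c,\gamma\}$. Each context has a sign: $-1$ for $\{C,c,\gamma\}$ and $+1$ for the other five. Two distinct observables are \emph{compatible} if they lie in a common context, and \emph{incompatible} otherwise. Let $\tilde\Sigma=\{X,\tilde X: X\in\Sigma\}$ (18 letters); the letter $X$ means "observable $X$ measured with value $1$" and $\tilde X$ means "$X$ measured with value $-1$". For a word $w=t_1\cdots t_m\in\tilde\Sigma^*$ define inductively partial assignments $v_0,\dots,v_m:\Sigma\rightharpoonup\{1,-1\}$ (an observable in $\mathrm{dom}(v_i)$ is \emph{determined} after step $i$, with value $v_i(X)$), and whether $w$ is consistent: $v_0$ is the empty assignment. Given $v_{i-1}$, let $t_i$ record observable $X$ with value $\varepsilon$. If $X\in\mathrm{dom}(v_{i-1})$ and $v_{i-1}(X)\ne\varepsilon$,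 then $w$ is \emph{inconsistent}. Otherwise let $u$ be the restriction of $v_{i-1}$ to observables that are equal to or compatible with $X$, extended by $u(X)=\varepsilon$; then $v_i$ is obtained from $u$ by repeatedly doing the following until nothing changes: whenever a context has exactly two of its observables in the domain, assign the third observable the value making the product of the three values equal to the sign of that context. The word $w$ is \emph{consistent} if no step is inconsistent; $\mathcal{L}$ is the set of consistent words (it contains the empty word). *)

theory Defs
  imports Complex_Main
begin

datatype obs = OA | OB | OC | Oa | Ob | Oc | Oalpha | Obeta | Ogamma

definition contexts :: "(obs list \<times> int) list" where
  "contexts =
     [([OA, OB, OC], 1), ([Oa, Ob, Oc], 1), ([Oalpha, Obeta, Ogamma], 1),
      ([OA, Oa, Oalpha], 1), ([OB, Ob, Obeta], 1), ([OC, Oc, Ogamma], -1)]"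

definition compatible :: "obs \<Rightarrow> obs \<Rightarrow> bool" where
  "compatible X Y \<longleftrightarrow> X \<noteq> Y \<and> (\<exists>(K, s) \<in> set contexts. X \<in> set K \<and> Y \<in> set K)"

type_synonym letter = "obs \<times> int"

definition letters :: "letter set" where
  "letters = {(X, e). e = 1 \<or> e = -1}"

type_synonym assignment = "obs \<Rightarrow> int option"

definition forces :: "assignment \<Rightarrow> obs \<Rightarrow> obs list \<times> int \<Rightarrow> bool" where
  "forces v Z Ks \<longleftrightarrow> Z \<in> set (fst Ks) \<and> v Z = None \<and>
      card {Y \<in> set (fst Ks). v Y \<noteq> None} = 2"

definition forced_value :: "assignment \<Rightarrow> obs \<Rightarrow> obs list \<times> int \<Rightarrow> int" where
  "forced_value v Z Ks = snd Ks * prod_list (map (\<lambda>Y. the (v Y)) (filter (\<lambda>Y. Y \<noteq> Z) (fst Ks)))"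

text \<open>One round of propagation (every forced observable receives its forced value;
  if several contexts force it, the first in the list is used).\<close>
definition prop_step :: "assignment \<Rightarrow> assignment" where
  "prop_step v = (\<lambda>Z. case v Z of
       Some e \<Rightarrow> Some e
     | None \<Rightarrow> (case find (forces v Z) contexts of
                  None \<Rightarrow> None
                | Some Ks \<Rightarrow> Some (forced_value v Z Ks)))"

text \<open>Repeat until nothing changes; since every non-trivial round adds at least one of the
  nine observables, nine rounds reach the fixpoint.\<close>
definition propagate :: "assignment \<Rightarrow> assignment" where
  "propagate v = (prop_step ^^ 9) v"

definition update :: "assignment \<Rightarrow> letter \<Rightarrow> assignment" where
  "update v t = (case t of (X, e) \<Rightarrow>
      propagate ((\<lambda>Y. if Y = X \<or> compatible X Y then v Y else None)(X := Some e)))"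

fun consistent_from :: "assignment \<Rightarrow> letter list \<Rightarrow> bool" where
  "consistent_from v [] = True"
| "consistent_from v ((X, e) # w) =
     ((case v X of None \<Rightarrow> True | Some e' \<Rightarrow> e' = e) \<and> consistent_from (update v (X, e)) w)"

definition consistent :: "letter list \<Rightarrow> bool" where
  "consistent w = consistent_from Map.empty w"

definition L :: "letter list set" where
  "L = {w. w \<in> lists letters \<and> consistent w}"

definition N :: "nat \<Rightarrow> nat" where
  "N n = card {w \<in> L. length w \<le> n}"

end

theory Submission
  imports Defs
begin

lemma obs_UNIV: "(UNIV :: obs set) = set [OA, OB, OC, Oa, Ob, Oc, Oalpha, Obeta, Ogamma]"
proof -
  have "x \<in> set [OA, OB, OC, Oa, Ob, Oc, Oalpha, Obeta, Ogamma]" for x by (cases x) auto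
  then show ?thesis by auto
qed

lemma letters_sub: "letters \<subseteq> set [OA, OB, OC, Oa, Ob, Oc, Oalpha, Obeta, Ogamma] \<times> {1, -1}"
  unfolding letters_def using obs_UNIV by auto

lemma finite_letters: "finite letters"
  by (rule finite_subset[OF letters_sub]) auto

lemma card_letters: "card letters \<le> 18"
proof -
  have "card letters \<le> card (set [OA, OB, OC, Oa, Ob, Oc, Oalpha, Obeta, Ogamma] \<times> {1, -1::int})"
    by (rule card_mono[OF _ letters_sub]) auto
  also have "\<dots> \<le> 18" by (simp add: card_cartesian_product)
  finally show ?thesis .
qed

lemma no_forces:
  assumes "\<And>Y. v Y \<noteq> None \<Longrightarrow> Y = X"
  shows "\<not> forces v Z Ks"
proof
  assume "forces v Z Ks"
  then have "card {Y \<in> set (fst Ks). v Y \<noteq> None} = 2" by (simp add: forces_def)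
  moreover have "{Y \<in> set (fst Ks). v Y \<noteq> None} \<subseteq> {X}" using assms by auto
  hence "card {Y \<in> set (fst Ks). v Y \<noteq> None} \<le> 1"
    using card_mono[of "{X}"] by fastforce
  ultimately show False by simp
qed

lemma prop_step_fix:
  assumes "\<And>Y. v Y \<noteq> None \<Longrightarrow> Y = X"
  shows "prop_step v = v"
proof
  fix Z
  have "find (forces v Z) contexts = None"
    using no_forces[OF assms] by (simp add: find_None_iff)
  then show "prop_step v Z = v Z"
    unfolding prop_step_def by (cases "v Z") auto
qed

lemma propagate_fix:
  assumes "\<And>Y. v Y \<noteq> None \<Longrightarrow> Y = X"
  shows "propagate v = v"
proof -
  have "(prop_step ^^ k) v = v" for k
    by (induction k) (auto simp: prop_step_fix[OF assms])
  then show ?thesis by (simp add: propagate_def)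
qed

fun other :: "obs \<Rightarrow> obs" where
  "other OA = Ob"
| "other _ = OA"

fun wd :: "obs \<Rightarrow> int list \<Rightarrow> letter list" where
  "wd X [] = []"
| "wd X (e # es) = (X, e) # wd (other X) es"

lemma incompat: "\<not> compatible OA Ob" "\<not> compatible Ob OA"
  by (auto simp: compatible_def contexts_def)

lemma wd_consistent:
  assumes "X = OA \<or> X = Ob" and "\<And>Y. v Y \<noteq> None \<Longrightarrow> Y = other X"
  shows "consistent_from v (wd X es)"
  using assms
proof (induction es arbitrary: X v)
  case Nil
  then show ?case by simp
next
  case (Cons e es)
  let ?u = "(\<lambda>Y. if Y = X \<or> compatible X Y then v Y else None)(X := Some e)"
  have ne: "X \<noteq> other X" using Cons.prems(1) by auto
  have vX: "v X = None" using Cons.prems(2)[of X] ne by blast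
  have dom: "?u Y \<noteq> None \<Longrightarrow> Y = X" for Y
  proof (rule ccontr)
    assume a: "?u Y \<noteq> None" "Y \<noteq> X"
    then have "v Y \<noteq> None" "compatible X Y" by (auto split: if_splits)
    then have "Y = other X" using Cons.prems(2) by blast
    then show False using \<open>compatible X Y\<close> Cons.prems(1) incompat by auto
  qed
  have upd: "update v (X, e) = ?u"
  proof -
    have "propagate ?u = ?u" by (rule propagate_fix) (rule dom)
    then show ?thesis unfolding update_def by simp
  qed
  have "consistent_from (update v (X, e)) (wd (other X) es)"
    unfolding upd
  proof (rule Cons.IH)
    show "other X = OA \<or> other X = Ob" using Cons.prems(1) by auto
    have oo: "other (other X) = X" using Cons.prems(1) by auto
    show "Y = other (other X)" if "?u Y \<noteq> None" for Y
      unfolding oo using dom that by blast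
  qed
  then show ?case using vX by (simp del: update_def)
qed

lemma wd_snd: "map snd (wd X es) = es"
  by (induction es arbitrary: X) auto

lemma wd_len: "length (wd X es) = length es"
  by (induction es arbitrary: X) auto

lemma wd_letters: "set es \<subseteq> {1, -1} \<Longrightarrow> wd X es \<in> lists letters"
  by (induction es arbitrary: X) (auto simp: letters_def)

lemma fin_set: "finite {w \<in> L. length w \<le> n}"
proof -
  have "{w \<in> L. length w \<le> n} \<subseteq> {xs. set xs \<subseteq> letters \<and> length xs \<le> n}"
    by (auto simp: L_def)
  then show ?thesis using finite_lists_length_le[OF finite_letters] finite_subset by blast
qed

lemma lower: "2 ^ n \<le> N n"
proof -
  let ?S = "{es. set es \<subseteq> {1, -1::int} \<and> length es = n}"
  have "card ?S = 2 ^ n"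
    using card_lists_length_eq[of "{1, -1::int}" n] by (simp add: numeral_2_eq_2)
  moreover have "inj_on (wd OA) ?S"
    by (metis (no_types, lifting) inj_onI wd_snd)
  moreover have "wd OA ` ?S \<subseteq> {w \<in> L. length w \<le> n}"
  proof
    fix w assume "w \<in> wd OA ` ?S"
    then obtain es where es: "es \<in> ?S" "w = wd OA es" by blast
    have c: "consistent_from Map.empty (wd OA es)"
      by (rule wd_consistent) auto
    have "wd OA es \<in> lists letters" using es(1) by (intro wd_letters) simp
    moreover have "length (wd OA es) = n" using es(1) wd_len[of OA es] by simp
    ultimately show "w \<in> {w \<in> L. length w \<le> n}"
      using es(2) c unfolding L_def consistent_def by blast
  qed
  ultimately have e: "card (wd OA ` ?S) = 2 ^ n" and m: "card (wd OA ` ?S) \<le> N n"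
  proof -
    show "card (wd OA ` ?S) = 2 ^ n" using card_image \<open>inj_on (wd OA) ?S\<close> \<open>card ?S = 2 ^ n\<close> by metis
    show "card (wd OA ` ?S) \<le> N n" unfolding N_def by (rule card_mono[OF fin_set]) fact
  qed
  from e m show ?thesis by simp
qed

lemma upper: "N n \<le> 64 ^ n"
proof -
  have "N n \<le> card {xs. set xs \<subseteq> letters \<and> length xs \<le> n}"
    unfolding N_def
    by (rule card_mono[OF finite_lists_length_le[OF finite_letters]]) (auto simp: L_def)
  also have "\<dots> = (\<Sum>i\<le>n. card letters ^ i)"
    by (rule card_lists_length_le[OF finite_letters])
  also have "\<dots> \<le> (\<Sum>i\<le>n. 18 ^ n)"
    apply (rule sum_mono)
  proof -
    fix i assume "i \<in> {..n}"
    then have "i \<le> n" by simp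
    have "card letters ^ i \<le> 18 ^ i" by (rule power_mono[OF card_letters]) simp
    also have "(18::nat) ^ i \<le> 18 ^ n" using \<open>i \<le> n\<close> by (rule power_increasing) simp
    finally show "card letters ^ i \<le> 18 ^ n" .
  qed
  also have "\<dots> = (n + 1) * 18 ^ n" by simp
  also have "\<dots> \<le> 2 ^ n * 32 ^ n"
    apply (rule mult_mono)
     apply (rule Suc_leI[OF less_exp[of n], unfolded Suc_eq_plus1])
    apply (rule power_mono; simp)
    apply simp
    apply simp
    done
  also have "\<dots> = 64 ^ n" by (simp add: power_mult_distrib[symmetric])
  finally show ?thesis .
qed

theorem mainTheorem6:
  shows "\<exists>c1 c2 :: real. 0 < c1 \<and> c1 \<le> c2 \<and>
           (\<forall>n::nat. n \<ge> 1 \<longrightarrow>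
              c1 * real n \<le> log 2 (real (N n)) \<and> log 2 (real (N n)) \<le> c2 * real n)"
proof (rule exI[of _ 1], rule exI[of _ 6], intro conjI allI impI)
  fix n :: nat
  have l: "(2::real) ^ n \<le> real (N n)" using lower[of n] by (metis of_nat_le_iff of_nat_numeral of_nat_power)
  have u: "real (N n) \<le> 64 ^ n" using upper[of n] by (metis of_nat_le_iff of_nat_numeral of_nat_power)
  have pos: "0 < real (N n)" using l by (meson less_le_trans zero_less_numeral zero_less_power)
  have "log 2 ((2::real) ^ n) \<le> log 2 (real (N n))" using l pos log_le_cancel_iff[of 2 "(2::real)^n" "real (N n)"] by simp
  moreover have "log 2 ((2::real) ^ n) = real n" by simp
  ultimately show "1 * real n \<le> log 2 (real (N n))" by simp
  have l64: "log 2 (64::real) = 6"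
  proof -
    have "log 2 ((2::real)^6) = 6" by (subst log_nat_power) auto
    moreover have "(2::real)^6 = 64" by simp
    ultimately show ?thesis by simp
  qed
  have "log 2 (real (N n)) \<le> log 2 ((64::real) ^ n)" using u pos by simp
  also have "\<dots> = real n * log 2 64" by (simp add: log_nat_power)
  finally show "log 2 (real (N n)) \<le> 6 * real n" using l64 by simp
qed auto

end
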